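(* Let $R$ be a local integral domain and $\mathcal O$ a valuation ring of $\mathrm{Frac}(R)$. Then the additive index $[R:\mathcal O\cap R]$ is finite if and only if $R\subseteq\mathcal O$.
   Context: Rings are commutative with identity. A valuation ring of a field $K$ is a subring $\mathcal O$ with $x\in\mathcal O$ or $x^{-1}\in\mathcal O$ for every nonzero $x\in K$. *)

theory Defs
  imports Main
begin

text \<open>We work inside an ambient field, the type 'a (= K). Subrings of K are integral domains,
and every integral domain arises this way inside its fraction field.\<close>

definition subring_of :: "'a::field set \<Rightarrow> bool" where
  "subring_of R \<longleftrightarrow> 0 \<in> R \<and> 1 \<in> R \<and> (\<forall>x\<in>R. - x \<in> R)
     \<and> (\<forall>x\<in>R. \<forall>y\<in>R. x + y \<in> R \<and> x * y \<in> R)"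

definition is_frac_field_of :: "'a::field set \<Rightarrow> bool" where
  "is_frac_field_of R \<longleftrightarrow> (\<forall>x::'a. \<exists>a\<in>R. \<exists>b\<in>R. b \<noteq> 0 \<and> x = a / b)"

definition ideal_in :: "'a::field set \<Rightarrow> 'a set \<Rightarrow> bool" where
  "ideal_in R I \<longleftrightarrow> I \<subseteq> R \<and> 0 \<in> I \<and> (\<forall>x\<in>I. \<forall>y\<in>I. x + y \<in> I)
     \<and> (\<forall>r\<in>R. \<forall>x\<in>I. r * x \<in> I)"

definition maximal_ideal_in :: "'a::field set \<Rightarrow> 'a set \<Rightarrow> bool" where
  "maximal_ideal_in R M \<longleftrightarrow> ideal_in R M \<and> M \<noteq> R
     \<and> (\<forall>J. ideal_in R J \<and> M \<subseteq> J \<longrightarrow> J = M \<or> J = R)"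

definition local_ring :: "'a::field set \<Rightarrow> bool" where
  "local_ring R \<longleftrightarrow> (\<exists>!M. maximal_ideal_in R M)"

definition valuation_ring :: "'a::field set \<Rightarrow> bool" where
  "valuation_ring V \<longleftrightarrow> subring_of V \<and> (\<forall>x::'a. x \<noteq> 0 \<longrightarrow> x \<in> V \<or> inverse x \<in> V)"

definition add_cosets :: "'a::field set \<Rightarrow> 'a set \<Rightarrow> 'a set set" where
  "add_cosets R S = {(\<lambda>y. x + y) ` S | x. x \<in> R}"

end

theory Submission
  imports Defs
begin

lemma sub_pow: "subring_of S \<Longrightarrow> x \<in> S \<Longrightarrow> x ^ n \<in> S"
  by (induction n) (auto simp: subring_of_def)

lemma sub_diff: "subring_of S \<Longrightarrow> x \<in> S \<Longrightarrow> y \<in> S \<Longrightarrow> x - y \<in> S"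
  unfolding subring_of_def by (metis diff_conv_add_uminus)

lemma key_eq:
  fixes x :: "'a::field"
  assumes "x \<noteq> 0"
  shows "(x ^ (i + Suc m) - x ^ i) * inverse x ^ (i + m) + inverse x ^ m = x"
proof -
  have "(x ^ (i + Suc m) - x ^ i) * inverse x ^ (i + m) = x - inverse x ^ m"
    using assms by (simp add: power_add algebra_simps power_inverse field_simps)
  thus ?thesis by simp
qed

theorem mainTheorem16:
  fixes R V :: "'a::field set"
  assumes "subring_of R"
    and "is_frac_field_of R"
    and "local_ring R"
    and "valuation_ring V"
  shows "finite (add_cosets R (V \<inter> R)) \<longleftrightarrow> R \<subseteq> V"
proof
  assume fin: "finite (add_cosets R (V \<inter> R))"
  have SV: "subring_of V" using assms(4) by (simp add: valuation_ring_def)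
  show "R \<subseteq> V"
  proof (rule ccontr)
    assume "\<not> R \<subseteq> V"
    then obtain x where xR: "x \<in> R" and xV: "x \<notin> V" by blast
    have x0: "x \<noteq> 0" using xV SV by (auto simp: subring_of_def)
    have tV: "inverse x \<in> V" using assms(4) x0 xV by (auto simp: valuation_ring_def)
    define f where "f = (\<lambda>k::nat. (\<lambda>y. x ^ k + y) ` (V \<inter> R))"
    have "range f \<subseteq> add_cosets R (V \<inter> R)"
      unfolding f_def add_cosets_def using sub_pow[OF assms(1) xR] by blast
    hence "finite (range f)" using fin finite_subset by blast
    hence "\<not> inj f" using finite_imageD by blast
    then obtain i j where ij: "f i = f j" "i \<noteq> j" unfolding inj_def by blast
    have "\<exists>i j. i < j \<and> f i = f j"
      using ij by (metis linorder_neqE_nat)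
    then obtain i j where ij: "i < j" "f i = f j" by blast
    have "x ^ j \<in> f i"
    proof -
      have "x ^ j + 0 \<in> f j" unfolding f_def using SV assms(1)
        by (auto simp: subring_of_def)
      thus ?thesis using ij by simp
    qed
    then obtain s where s: "s \<in> V" "x ^ j = x ^ i + s" unfolding f_def by blast
    have dV: "x ^ j - x ^ i \<in> V" using s by simp
    obtain m where j: "j = i + Suc m" using ij(1) less_iff_Suc_add
      by (metis add_Suc_right add.commute)
    have "(x ^ (i + Suc m) - x ^ i) * inverse x ^ (i + m) + inverse x ^ m \<in> V"
      using dV j SV sub_pow[OF SV tV] by (auto simp: subring_of_def)
    thus False using key_eq[OF x0] xV by simp
  qed
next
  assume RV: "R \<subseteq> V"
  have "add_cosets R (V \<inter> R) \<subseteq> {R}"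
  proof
    fix C assume "C \<in> add_cosets R (V \<inter> R)"
    then obtain x where x: "x \<in> R" "C = (\<lambda>y. x + y) ` R"
      unfolding add_cosets_def using RV by auto
    have "(\<lambda>y. x + y) ` R = R"
    proof
      show "(\<lambda>y. x + y) ` R \<subseteq> R" using x assms(1) by (auto simp: subring_of_def)
      show "R \<subseteq> (\<lambda>y. x + y) ` R"
      proof
        fix z assume "z \<in> R"
        hence "z - x \<in> R" using sub_diff[OF assms(1)] x by blast
        thus "z \<in> (\<lambda>y. x + y) ` R" by (metis add.commute diff_add_cancel image_eqI)
      qed
    qed
    thus "C \<in> {R}" using x by simp
  qed
  thus "finite (add_cosets R (V \<inter> R))" using finite_subset by blast
qed

end
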